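(* Let $f \in \mathrm{Inj}(\Omega)$ have at least one infinite cycle, and let $n \in \mathbb{Z}_+$. Then there is a transposition $h \in \mathrm{Fin}(\Omega)$ such that $(fh)\mathrm{C}_n = (f)\mathrm{C}_n + 1$ and $(fh)\mathrm{C}_m = (f)\mathrm{C}_m$ for all $m \in \mathbb{Z}_+ \setminus \{n\}$.
   Context: $\Omega$ is a countably infinite set; maps are written on the right and composed left to right. $\mathrm{Inj}(\Omega)$ is the monoid of injective maps $\Omega\to\Omega$; $\mathrm{Fin}(\Omega)$ the group of permutations moving only finitely many points. For $f\in\mathrm{Inj}(\Omega)$, a cycle of $f$ is a nonempty $\Sigma\subseteq\Omega$ such that (a) for all $\alpha\in\Omega$, $(\alpha)f\in\Sigma$ iff $\alpha\in\Sigma$, and (b) no proper nonempty subset of $\Sigma$ satisfies (a). For $n\in\mathbb{Z}_+$, $(f)\mathrm{C}_n$ is the cardinal number of cycles of $f$ of cardinality $n$ (cardinal arithmetic, so $\aleph_0+1=\aleph_0$). *)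

theory Defs
  imports Main "HOL-Library.Countable_Set" "HOL-Library.Extended_Nat"
    "HOL-Combinatorics.Transposition"
begin

text \<open>Omega is the universe of a type 'a (assumed countably infinite in the theorem).
  Maps are written on the right and composed left to right, so the product f h
  (first f, then h) is the HOL function h o f.\<close>

definition is_cycle :: "('a \<Rightarrow> 'a) \<Rightarrow> 'a set \<Rightarrow> bool" where
  "is_cycle f S \<longleftrightarrow>
     S \<noteq> {} \<and> (\<forall>x. f x \<in> S \<longleftrightarrow> x \<in> S) \<and>
     \<not> (\<exists>T. T \<noteq> {} \<and> T \<subset> S \<and> (\<forall>x. f x \<in> T \<longleftrightarrow> x \<in> T))"

text \<open>Number of cycles of f of cardinality n; as a cardinal it is at most aleph_0
  (the cycles are disjoint subsets of a countable set), so it is represented in enat,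
  with infinity standing for aleph_0 (and infinity + 1 = infinity).\<close>

definition cycle_count :: "('a \<Rightarrow> 'a) \<Rightarrow> nat \<Rightarrow> enat" where
  "cycle_count f n =
     (let X = {S. is_cycle f S \<and> finite S \<and> card S = n}
      in if finite X then enat (card X) else \<infinity>)"

end

theory Submission
  imports Defs
begin

definition clsd :: "('a \<Rightarrow> 'a) \<Rightarrow> 'a set \<Rightarrow> bool" where
  "clsd f T \<longleftrightarrow> (\<forall>x. f x \<in> T \<longleftrightarrow> x \<in> T)"

lemma is_cycle_alt: "is_cycle f S \<longleftrightarrow> S \<noteq> {} \<and> clsd f S \<and>
   (\<forall>T. clsd f T \<longrightarrow> T \<subseteq> S \<longrightarrow> T \<noteq> {} \<longrightarrow> T = S)"
  unfolding is_cycle_def clsd_def by blast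

lemma clsd_Int: "clsd f A \<Longrightarrow> clsd f B \<Longrightarrow> clsd f (A \<inter> B)"
  by (auto simp: clsd_def)

lemma clsd_Diff: "clsd f A \<Longrightarrow> clsd f B \<Longrightarrow> clsd f (A - B)"
  by (auto simp: clsd_def)

lemma cycle_disj: assumes "is_cycle f S" "clsd f T" shows "S \<subseteq> T \<or> S \<inter> T = {}"
proof -
  have "clsd f (S \<inter> T)" using assms clsd_Int is_cycle_alt by blast
  then show ?thesis using assms(1) unfolding is_cycle_alt by blast
qed

lemma cycle_eq: assumes "is_cycle f A" "is_cycle f B" "A \<inter> B \<noteq> {}" shows "A = B"
proof -
  have "A \<subseteq> B" using cycle_disj[OF assms(1)] assms is_cycle_alt by blast
  moreover have "B \<subseteq> A" using cycle_disj[OF assms(2)] assms is_cycle_alt by blast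
  ultimately show ?thesis by blast
qed

lemma cycle_sub: "is_cycle f S \<Longrightarrow> clsd f T \<Longrightarrow> T \<subseteq> S \<Longrightarrow> T \<noteq> {} \<Longrightarrow> T = S"
  by (simp add: is_cycle_alt)

theorem mainTheorem9:
  fixes f :: "'a \<Rightarrow> 'a" and n :: nat
  assumes "countable (UNIV :: 'a set)" and "infinite (UNIV :: 'a set)"
    and "inj f"
    and "\<exists>S. is_cycle f S \<and> infinite S"
    and "n \<ge> 1"
  shows "\<exists>a b. a \<noteq> b \<and>
           cycle_count (transpose a b \<circ> f) n = cycle_count f n + 1 \<and>
           (\<forall>m. m \<ge> 1 \<and> m \<noteq> n \<longrightarrow>
                 cycle_count (transpose a b \<circ> f) m = cycle_count f m)"
proof -
  obtain S where S: "is_cycle f S" "infinite S" using assms(4) by blast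
  then obtain x where xS: "x \<in> S" by (auto simp: is_cycle_def)
  have SC: "clsd f S" using S is_cycle_alt by blast
  define c where "c k = (f ^^ k) x" for k
  have cSuc: "c (Suc k) = f (c k)" for k by (simp add: c_def)
  have c0: "c 0 = x" by (simp add: c_def)
  have cS: "c k \<in> S" for k
    by (induction k) (use SC xS in \<open>auto simp: cSuc c0 clsd_def\<close>)
  have injc: "inj c"
  proof (rule linorder_injI)
    fix i j :: nat assume ij: "i < j"
    show "c i \<noteq> c j"
    proof
      assume eq: "c i = c j"
      define p where "p = j - i"
      have pp: "p > 0" using ij by (simp add: p_def)
      have "(f ^^ i) ((f ^^ (j-i)) x) = (f ^^ (i + (j-i))) x" by (simp add: funpow_add)
      then have "c j = (f ^^ i) (c p)" using ij by (simp add: c_def p_def)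
      then have "(f ^^ i) (c p) = (f ^^ i) x" using eq by (simp add: c_def)
      then have cp: "c p = x" using inj_fn[OF assms(3), of i] by (meson injD)
      define Orb where "Orb = c ` {..<p}"
      have "clsd f Orb"
        unfolding clsd_def
      proof (intro allI iffI)
        fix y assume "y \<in> Orb"
        then obtain k where k: "k < p" "y = c k" unfolding Orb_def by blast
        have fy: "f y = c (Suc k)" using k(2) cSuc by simp
        show "f y \<in> Orb"
        proof (cases "Suc k < p")
          case True then show ?thesis using fy unfolding Orb_def by blast
        next
          case False then have "Suc k = p" using k by simp
          then have "f y = c 0" using fy cp c0 by simp
          then show ?thesis using pp unfolding Orb_def by blast
        qed
      next
        fix y assume "f y \<in> Orb"
        then obtain k where k: "k < p" "f y = c k" unfolding Orb_def by blast
        show "y \<in> Orb"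
        proof (cases k)
          case 0
          have "c p = f (c (p - 1))" using cSuc[of "p-1"] pp by simp
          then have "f y = f (c (p - 1))" using k(2) 0 cp c0 by simp
          then have "y = c (p - 1)" using assms(3) by (meson injD)
          then show ?thesis using pp unfolding Orb_def by auto
        next
          case (Suc k')
          then have "f y = f (c k')" using k cSuc by simp
          then have "y = c k'" using assms(3) by (meson injD)
          then show ?thesis using k Suc unfolding Orb_def by auto
        qed
      qed
      moreover have "x \<in> Orb" using pp c0 unfolding Orb_def by force
      ultimately have "S \<subseteq> Orb" using cycle_disj[OF S(1)] xS by blast
      then show False using S(2) finite_subset Orb_def by blast
    qed
  qed
  define b where "b = c n"
  define g where "g = transpose x b \<circ> f"
  have xb: "x \<noteq> b" using injc assms(5) c0 b_def by (metis injD not_one_le_zero)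
  have bS: "b \<in> S" using cS b_def by simp
  have injg: "inj g" unfolding g_def using assms(3) by (simp add: inj_compose inj_transpose)
  have trS: "transpose x b z \<in> S \<longleftrightarrow> z \<in> S" for z
    using xS bS by (auto simp: transpose_def)
  have gS: "clsd g S" using SC trS by (simp add: clsd_def g_def)
  have gout: "y \<notin> S \<Longrightarrow> g y = f y" for y
    using SC xS bS by (auto simp: clsd_def g_def transpose_def)
  have transfer: "clsd g T \<longleftrightarrow> clsd f T" if "T \<inter> S = {}" for T
  proof -
    have "(g y \<in> T \<longleftrightarrow> y \<in> T) \<longleftrightarrow> (f y \<in> T \<longleftrightarrow> y \<in> T)" for y
    proof (cases "y \<in> S")
      case True
      then have "g y \<in> S" "f y \<in> S" using gS SC by (auto simp: clsd_def)
      then show ?thesis using True that by blast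
    next
      case False then show ?thesis using gout by simp
    qed
    then show ?thesis unfolding clsd_def by blast
  qed
  define cc where "cc i = c (i mod n)" for i
  have ccSuc: "g (cc i) = cc (Suc i)" for i
  proof (cases "Suc (i mod n) = n")
    case True
    then have "g (cc i) = x" by (simp add: cc_def g_def cSuc[symmetric] b_def)
    then show ?thesis using True by (simp add: cc_def mod_Suc c0)
  next
    case False
    then have lt: "Suc (i mod n) < n" using assms(5)
      by (metis Suc_lessI mod_less_divisor not_one_le_zero neq0_conv)
    have "c (Suc (i mod n)) \<noteq> x" using injc c0 by (metis injD nat.distinct(1))
    moreover have "c (Suc (i mod n)) \<noteq> b" using injc lt b_def by (metis injD less_irrefl)
    ultimately have "g (cc i) = c (Suc (i mod n))"
      by (simp add: cc_def g_def cSuc[symmetric])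
    then show ?thesis using False by (simp add: cc_def mod_Suc)
  qed
  define C where "C = c ` {..<n}"
  have Ccc: "C = range cc"
  proof
    show "C \<subseteq> range cc"
    proof
      fix y assume "y \<in> C"
      then obtain j where j: "j < n" "y = c j" unfolding C_def by blast
      then have "y = cc j" by (simp add: cc_def)
      then show "y \<in> range cc" by blast
    qed
    show "range cc \<subseteq> C" unfolding C_def cc_def using assms(5) by auto
  qed
  have Cfin: "finite C" "card C = n" using injc unfolding C_def
    by (auto simp: card_image inj_on_subset)
  have CS: "C \<subseteq> S" using cS C_def by auto
  have xC: "x \<in> C" using assms(5) c0 C_def by force
  have bC: "b \<notin> C" using injc b_def C_def by (auto dest: injD)
  have gC: "clsd g C"
    unfolding clsd_def
  proof (intro allI iffI)
    fix y assume "y \<in> C" then show "g y \<in> C" using Ccc ccSuc by auto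
  next
    fix y assume "g y \<in> C"
    then obtain k where k: "g y = cc k" using Ccc by auto
    have "cc k = cc (k + n)" by (simp add: cc_def)
    also have "\<dots> = g (cc (k + n - 1))" using ccSuc assms(5)
      by (metis Suc_diff_1 add_gr_0 less_le_trans zero_less_one)
    finally have "y = cc (k + n - 1)" using k injg by (metis injD)
    then show "y \<in> C" using Ccc by auto
  qed
  have Ccyc: "is_cycle g C"
    unfolding is_cycle_alt
  proof (intro conjI allI impI)
    show "C \<noteq> {}" using xC by auto
    show "clsd g C" by fact
    fix T assume T: "clsd g T" "T \<subseteq> C" "T \<noteq> {}"
    then obtain i where i: "i < n" "c i \<in> T" unfolding C_def by auto
    have ccT: "cc i \<in> T" using i by (simp add: cc_def)
    have step: "cc (i + k) \<in> T" for k
    proof (induction k)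
      case 0 show ?case using ccT by simp
    next
      case (Suc k)
      have "g (cc (i+k)) \<in> T" using Suc T(1) by (simp add: clsd_def)
      then show ?case using ccSuc[of "i+k"] by simp
    qed
    show "T = C"
    proof
      show "C \<subseteq> T"
      proof
        fix y assume "y \<in> C"
        then obtain j where j: "j < n" "y = c j" unfolding C_def by auto
        have "cc (i + (n - i + j)) = y" using i j by (simp add: cc_def)
        then show "y \<in> T" using step by metis
      qed
    qed (use T in auto)
  qed
  define S' where "S' = S - C"
  have gS': "clsd g S'" using gS gC clsd_Diff S'_def by blast
  have S'inf: "infinite S'" using S(2) Cfin S'_def by auto
  have bS': "b \<in> S'" using bS bC S'_def by auto
  have xS': "x \<notin> S'" using xC S'_def by auto
  have S'cyc: "is_cycle g S'"
    unfolding is_cycle_alt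
  proof (intro conjI allI impI)
    show "S' \<noteq> {}" using bS' by auto
    show "clsd g S'" by fact
    fix T assume T: "clsd g T" "T \<subseteq> S'" "T \<noteq> {}"
    show "T = S'"
    proof (rule ccontr)
      assume ne: "T \<noteq> S'"
      define U where "U = (if b \<in> T then S' - T else T)"
      have U: "clsd g U" "U \<subseteq> S'" "U \<noteq> {}" "b \<notin> U"
        using T ne gS' clsd_Diff unfolding U_def by auto
      have xU: "x \<notin> U" using U(2) xS' by auto
      have "clsd f U"
        unfolding clsd_def
      proof (intro allI iffI)
        fix y assume "y \<in> U"
        then have "g y \<in> U" using U(1) by (simp add: clsd_def)
        then show "f y \<in> U" using xU U(4) by (auto simp: g_def transpose_def split: if_splits)
      next
        fix y assume fy: "f y \<in> U"
        then have "g y = f y" using xU U(4) by (auto simp: g_def transpose_def)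
        then show "y \<in> U" using fy U(1) unfolding clsd_def by metis
      qed
      then have "S \<subseteq> U \<or> S \<inter> U = {}" using cycle_disj[OF S(1)] by blast
      then show False using xS xU U(2,3) S'_def by blast
    qed
  qed
  have char: "is_cycle g T \<longleftrightarrow> (is_cycle f T \<and> T \<noteq> S) \<or> T = C \<or> T = S'" for T
  proof
    assume T: "is_cycle g T"
    show "(is_cycle f T \<and> T \<noteq> S) \<or> T = C \<or> T = S'"
    proof (cases "T \<inter> S = {}")
      case True
      have "is_cycle f T" unfolding is_cycle_alt
      proof (intro conjI allI impI)
        show "T \<noteq> {}" using T unfolding is_cycle_alt by blast
        show "clsd f T" using T transfer[OF True] unfolding is_cycle_alt by blast
        fix U assume "clsd f U" "U \<subseteq> T" "U \<noteq> {}"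
        moreover have "U \<inter> S = {}" using True \<open>U \<subseteq> T\<close> by blast
        ultimately show "U = T" using cycle_sub[OF T] transfer[of U] by blast
      qed
      moreover have "T \<noteq> S" using True xS by auto
      ultimately show ?thesis by blast
    next
      case False
      then have TS: "T \<subseteq> S" using cycle_disj[OF T gS] by blast
      show ?thesis
      proof (cases "T \<inter> C = {}")
        case True
        then have "T \<subseteq> S'" using TS S'_def by blast
        then have "T = S'" using cycle_sub[OF S'cyc] T is_cycle_alt by blast
        then show ?thesis by blast
      next
        case False
        then show ?thesis using cycle_eq[OF T Ccyc] by blast
      qed
    qed
  next
    assume "(is_cycle f T \<and> T \<noteq> S) \<or> T = C \<or> T = S'"
    then show "is_cycle g T"
    proof (elim disjE conjE)
      assume T: "is_cycle f T" "T \<noteq> S"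
      have TS: "T \<inter> S = {}"
        using cycle_disj[OF T(1) SC] cycle_sub[OF S(1)] T is_cycle_alt by blast
      show "is_cycle g T" unfolding is_cycle_alt
      proof (intro conjI allI impI)
        show "T \<noteq> {}" using T unfolding is_cycle_alt by blast
        show "clsd g T" using T transfer[OF TS] unfolding is_cycle_alt by blast
        fix U assume "clsd g U" "U \<subseteq> T" "U \<noteq> {}"
        moreover have "U \<inter> S = {}" using TS \<open>U \<subseteq> T\<close> by blast
        ultimately show "U = T" using cycle_sub[OF T(1)] transfer[of U] by blast
      qed
    qed (use Ccyc S'cyc in auto)
  qed
  have CnotF: "\<not> is_cycle f C"
  proof
    assume "is_cycle f C"
    then have "C = S" using cycle_eq[OF _ S(1)] xC xS by blast
    then show False using Cfin S(2) by simp
  qed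
  have sets: "{T. is_cycle g T \<and> finite T \<and> card T = m} =
      {T. is_cycle f T \<and> finite T \<and> card T = m} \<union> (if m = n then {C} else {})" for m
    using char S(2) S'inf Cfin CnotF by auto
  have cnt_other: "cycle_count g m = cycle_count f m" if "m \<noteq> n" for m
    using sets[of m] that by (simp add: cycle_count_def)
  have cnt_n: "cycle_count g n = cycle_count f n + 1"
  proof -
    let ?X = "{T. is_cycle f T \<and> finite T \<and> card T = n}"
    have "{T. is_cycle g T \<and> finite T \<and> card T = n} = insert C ?X" using sets[of n] by auto
    moreover have "C \<notin> ?X" using CnotF by auto
    ultimately show ?thesis
      by (simp add: cycle_count_def Let_def eSuc_enat[symmetric] eSuc_plus_1)
  qed
  show ?thesis
    using xb cnt_n cnt_other unfolding g_def by blast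
qed

end
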